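(* Under $\mathsf{SBIM}(n,k,p,q_1,q_2)$ with $m=n/k$, every adaptive group testing scheme that exactly recovers $X$ from noiseless tests, using $T$ tests, satisfies $$\mathbb{E}[T]\ \ge\ m\cdot\mathbb{E}_{Z,Z'}\Big[(k-Z)\,\mathsf{h}_\mathsf{b}\big(1-(1-q_1)^Z(1-q_2)^{Z'}\big)\Big],$$ where $Z\sim\mathsf{Binom}(k,p)$ and $Z'\sim\mathsf{Binom}(n-k,p)$ are independent.
   Context: Stochastic block infection model $\mathsf{SBIM}(n,k,p,q_1,q_2)$: the vertex set $[n]$ is partitioned into $m=n/k$ known communities $\mathcal{C}_1,\dots,\mathcal{C}_m$, each of size $k$. Each vertex is independently a seed with probability $p\in(0,1]$. Then every seed $v$ independently infects each other vertex $u$ in its own community with probability $q_1\in[0,1]$ and each vertex outside its community with probability $q_2\in[0,1]$ (all transmission events mutually independent and independent of seed selection). $X_v=1$ iff $v$ is a seed or is infected by some seed. A test on $S$ returns $\bigvee_{i\in S}X_i$ noiselessly; adaptive schemes choose tests based on previous outcomes and must recover $X$ exactly. $\mathsf{h}_\mathsf{b}$ is the binary entropy function in bits. *)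

theory Defs
  imports "HOL-Probability.Probability"
begin

definition hb :: "real \<Rightarrow> real" where
  "hb x = (if x \<le> 0 \<or> x \<ge> 1 then 0
           else - x * log 2 x - (1 - x) * log 2 (1 - x))"

text \<open>Vertices are 0..n-1; comm v is the (known) community index of vertex v.
  A valid partition into m communities of size k each.\<close>
definition valid_partition :: "nat \<Rightarrow> nat \<Rightarrow> nat \<Rightarrow> (nat \<Rightarrow> nat) \<Rightarrow> bool" where
  "valid_partition n m k comm \<longleftrightarrow> n = m * k \<and>
     (\<forall>v<n. comm v < m) \<and> (\<forall>j<m. card {v. v < n \<and> comm v = j} = k)"

definition seed_pmf :: "nat \<Rightarrow> real \<Rightarrow> (nat \<Rightarrow> bool) pmf" where
  "seed_pmf n p = Pi_pmf {..<n} False (\<lambda>_. bernoulli_pmf p)"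

text \<open>Transmission indicators: edge (v,u) means seed v would infect u;
  probability q1 inside a community and q2 across communities, all independent.\<close>
definition trans_pmf :: "nat \<Rightarrow> (nat \<Rightarrow> nat) \<Rightarrow> real \<Rightarrow> real \<Rightarrow> (nat \<times> nat \<Rightarrow> bool) pmf" where
  "trans_pmf n comm q1 q2 = Pi_pmf ({..<n} \<times> {..<n}) False
     (\<lambda>(v, u). bernoulli_pmf (if comm v = comm u then q1 else q2))"

definition infection_state :: "nat \<Rightarrow> (nat \<Rightarrow> bool) \<Rightarrow> (nat \<times> nat \<Rightarrow> bool) \<Rightarrow> nat \<Rightarrow> bool" where
  "infection_state n s e u = (u < n \<and> (s u \<or> (\<exists>v<n. v \<noteq> u \<and> s v \<and> e (v, u))))"

definition SBIM :: "nat \<Rightarrow> (nat \<Rightarrow> nat) \<Rightarrow> real \<Rightarrow> real \<Rightarrow> real \<Rightarrow> (nat \<Rightarrow> bool) pmf" where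
  "SBIM n comm p q1 q2 =
     bind_pmf (seed_pmf n p) (\<lambda>s. map_pmf (infection_state n s) (trans_pmf n comm q1 q2))"

text \<open>Deterministic adaptive group testing schemes as finite decision trees:
  Test S t0 t1 performs the test on pool S and continues with t0 on a negative
  outcome, t1 on a positive one; Leaf est outputs the estimate est.\<close>
datatype gt_scheme = Leaf "nat \<Rightarrow> bool" | Test "nat set" gt_scheme gt_scheme

definition test_outcome :: "nat set \<Rightarrow> (nat \<Rightarrow> bool) \<Rightarrow> bool" where
  "test_outcome S x = (\<exists>i\<in>S. x i)"

fun num_tests :: "gt_scheme \<Rightarrow> (nat \<Rightarrow> bool) \<Rightarrow> nat" where
  "num_tests (Leaf est) x = 0"
| "num_tests (Test S t0 t1) x = Suc (if test_outcome S x then num_tests t1 x else num_tests t0 x)"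

fun scheme_output :: "gt_scheme \<Rightarrow> (nat \<Rightarrow> bool) \<Rightarrow> (nat \<Rightarrow> bool)" where
  "scheme_output (Leaf est) x = est"
| "scheme_output (Test S t0 t1) x = (if test_outcome S x then scheme_output t1 x else scheme_output t0 x)"

definition exact_recovery :: "nat \<Rightarrow> (nat \<Rightarrow> bool) pmf \<Rightarrow> gt_scheme \<Rightarrow> bool" where
  "exact_recovery n D sch \<longleftrightarrow> (\<forall>x\<in>set_pmf D. \<forall>u<n. scheme_output sch x u = x u)"

end

theory Submission
  imports Defs
begin

lemma gibbs:
  fixes w q :: "'a \<Rightarrow> real"
  assumes fin: "finite A" and pos: "\<And>x. x \<in> A \<Longrightarrow> w x > 0 \<and> q x > 0"
    and sw: "sum w A = 1" and sq: "sum q A \<le> 1"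
  shows "(\<Sum>x\<in>A. w x * (- log 2 (w x))) \<le> (\<Sum>x\<in>A. w x * (- log 2 (q x)))"
proof -
  have "(\<Sum>x\<in>A. w x * (- log 2 (q x))) - (\<Sum>x\<in>A. w x * (- log 2 (w x)))
       = - (\<Sum>x\<in>A. w x * ln (q x / w x)) / ln 2"
    unfolding sum_subtractf[symmetric] sum_divide_distrib sum_negf[symmetric]
    by (intro sum.cong refl) (use pos in \<open>force simp: log_def ln_div algebra_simps diff_divide_distrib\<close>)
  moreover have "(\<Sum>x\<in>A. w x * ln (q x / w x)) \<le> (\<Sum>x\<in>A. w x * (q x / w x - 1))"
    by (intro sum_mono mult_left_mono ln_le_minus_one) (auto dest: pos intro: less_imp_le)
  moreover have "(\<Sum>x\<in>A. w x * (q x / w x - 1)) = sum q A - sum w A"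
    by (simp add: sum_subtractf right_diff_distrib pos less_imp_neq[symmetric] cong: sum.cong)
  ultimately show ?thesis using sw sq
    by (smt (verit) divide_nonneg_pos ln_gt_zero)
qed

lemma kraft:
  "finite A \<Longrightarrow> inj_on (scheme_output sch) A \<Longrightarrow> (\<Sum>x\<in>A. (1/2::real) ^ num_tests sch x) \<le> 1"
proof (induction sch arbitrary: A)
  case (Leaf est)
  then have "card A \<le> 1" by (simp add: inj_on_def card_le_Suc0_iff_eq)
  then show ?case by simp
next
  case (Test S t0 t1)
  let ?A1 = "{x\<in>A. test_outcome S x}" and ?A0 = "{x\<in>A. \<not> test_outcome S x}"
  have i1: "inj_on (scheme_output t1) ?A1" using Test.prems(2) by (auto simp: inj_on_def)
  have i0: "inj_on (scheme_output t0) ?A0" using Test.prems(2) by (auto simp: inj_on_def)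
  have "(\<Sum>x\<in>A. (1/2::real) ^ num_tests (Test S t0 t1) x)
     = (\<Sum>x\<in>?A1. (1/2::real) ^ num_tests (Test S t0 t1) x) + (\<Sum>x\<in>?A0. (1/2::real) ^ num_tests (Test S t0 t1) x)"
  proof -
    have "A = ?A1 \<union> ?A0" by auto
    then show ?thesis using Test.prems(1) by (metis (no_types, lifting) sum.union_disjoint finite_Un disjoint_iff mem_Collect_eq)
  qed
  also have "\<dots> = (\<Sum>x\<in>?A1. (1/2::real) ^ num_tests t1 x)/2 + (\<Sum>x\<in>?A0. (1/2::real) ^ num_tests t0 x)/2"
    by (simp add: sum_divide_distrib)
  also have "\<dots> \<le> 1/2 + 1/2"
    using Test.IH(1)[OF _ i0] Test.IH(2)[OF _ i1] Test.prems(1) by (intro add_mono) auto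
  finally show ?case by simp
qed


definition ent :: "'a pmf \<Rightarrow> real" where
  "ent P = (\<Sum>x\<in>set_pmf P. pmf P x * (- log 2 (pmf P x)))"

lemma sum_pmf_le_1: "finite A \<Longrightarrow> sum (pmf P) A \<le> 1"
  by (metis measure_measure_pmf_finite measure_pmf.prob_le_1)

lemma pmf_bind_finite:
  assumes "finite (set_pmf M)"
  shows "pmf (bind_pmf M N) x = (\<Sum>s\<in>set_pmf M. pmf M s * pmf (N s) x)"
  by (subst pmf_bind, subst integral_measure_pmf_real[OF assms]) (auto simp: mult.commute)

lemma ent_bind:
  assumes finM: "finite (set_pmf M)" and finN: "\<And>s. s \<in> set_pmf M \<Longrightarrow> finite (set_pmf (N s))"
  shows "(\<Sum>s\<in>set_pmf M. pmf M s * ent (N s)) \<le> ent (bind_pmf M N)"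
proof -
  define B where "B = bind_pmf M N"
  define \<phi> where "\<phi> x = - log 2 (pmf B x)" for x
  have SB: "set_pmf B = (\<Union>s\<in>set_pmf M. set_pmf (N s))" by (simp add: B_def set_bind_pmf)
  have finB: "finite (set_pmf B)" using SB finM finN by auto
  have "ent B = (\<Sum>x\<in>set_pmf B. (\<Sum>s\<in>set_pmf M. pmf M s * pmf (N s) x) * \<phi> x)"
    unfolding ent_def \<phi>_def B_def by (simp add: pmf_bind_finite[OF finM])
  also have "\<dots> = (\<Sum>s\<in>set_pmf M. pmf M s * (\<Sum>x\<in>set_pmf B. pmf (N s) x * \<phi> x))"
    by (simp add: sum_distrib_right sum_distrib_left mult.assoc sum.swap[of _ "set_pmf B"])
  also have "\<dots> = (\<Sum>s\<in>set_pmf M. pmf M s * (\<Sum>x\<in>set_pmf (N s). pmf (N s) x * \<phi> x))"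
  proof (rule sum.cong[OF refl])
    fix s assume s: "s \<in> set_pmf M"
    have "(\<Sum>x\<in>set_pmf B. pmf (N s) x * \<phi> x) = (\<Sum>x\<in>set_pmf (N s). pmf (N s) x * \<phi> x)"
      by (rule sum.mono_neutral_right) (use finB SB s in \<open>auto simp: set_pmf_eq\<close>)
    then show "pmf M s * (\<Sum>x\<in>set_pmf B. pmf (N s) x * \<phi> x) = pmf M s * (\<Sum>x\<in>set_pmf (N s). pmf (N s) x * \<phi> x)" by simp
  qed
  also have "\<dots> \<ge> (\<Sum>s\<in>set_pmf M. pmf M s * ent (N s))"
  proof (intro sum_mono mult_left_mono)
    fix s assume s: "s \<in> set_pmf M"
    show "ent (N s) \<le> (\<Sum>x\<in>set_pmf (N s). pmf (N s) x * \<phi> x)"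
      unfolding ent_def \<phi>_def
    proof (rule gibbs)
      show "finite (set_pmf (N s))" using finN s .
      fix x assume x: "x \<in> set_pmf (N s)"
      then have "x \<in> set_pmf B" using SB s by auto
      then show "0 < pmf (N s) x \<and> 0 < pmf B x" using x by (simp add: pmf_positive)
    next
      show "sum (pmf (N s)) (set_pmf (N s)) = 1" using finN s by (simp add: sum_pmf_eq_1)
      show "sum (pmf B) (set_pmf (N s)) \<le> 1" using finN s by (simp add: sum_pmf_le_1)
    qed
  qed simp
  finally show ?thesis unfolding B_def .
qed


lemma log_prod_pos:
  fixes x :: "'a \<Rightarrow> real"
  shows "finite A \<Longrightarrow> (\<And>a. a \<in> A \<Longrightarrow> x a > 0) \<Longrightarrow> log b (\<Prod>a\<in>A. x a) = (\<Sum>a\<in>A. log b (x a))"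
proof (induction A rule: finite_induct)
  case (insert a A)
  have "(\<Prod>a\<in>A. x a) > 0" using insert by (intro prod_pos) auto
  moreover have "x a > 0" using insert by auto
  ultimately have "log b (x a * prod x A) = log b (x a) + log b (prod x A)"
    by (simp add: log_mult)
  then show ?case using insert by simp
qed simp

lemma ent_Pi:
  assumes finA: "finite A" and finP: "\<And>a. a \<in> A \<Longrightarrow> finite (set_pmf (P a))"
  shows "ent (Pi_pmf A d P) = (\<Sum>a\<in>A. ent (P a))"
proof -
  let ?Q = "Pi_pmf A d P"
  define \<psi> where "\<psi> a y = - log 2 (pmf (P a) y)" for a y
  have SQ: "set_pmf ?Q = PiE_dflt A d (set_pmf \<circ> P)" by (rule set_Pi_pmf[OF finA])
  have finQ: "finite (set_pmf ?Q)" unfolding SQ using finA finP by (intro finite_PiE_dflt) auto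
  have key: "pmf ?Q f * (- log 2 (pmf ?Q f)) = (\<Sum>a\<in>A. pmf ?Q f * \<psi> a (f a))"
    if f: "f \<in> set_pmf ?Q" for f
  proof -
    have fd: "\<forall>x. x \<notin> A \<longrightarrow> f x = d" and fs: "\<And>a. a \<in> A \<Longrightarrow> f a \<in> set_pmf (P a)"
      using f unfolding SQ PiE_dflt_def by auto
    have "pmf ?Q f = (\<Prod>a\<in>A. pmf (P a) (f a))" using fd finA by (simp add: pmf_Pi)
    moreover have "log 2 (\<Prod>a\<in>A. pmf (P a) (f a)) = (\<Sum>a\<in>A. log 2 (pmf (P a) (f a)))"
      using finA fs by (intro log_prod_pos) (auto simp: pmf_positive)
    ultimately show ?thesis by (simp add: \<psi>_def sum_distrib_left sum_negf)
  qed
  have "ent ?Q = (\<Sum>f\<in>set_pmf ?Q. \<Sum>a\<in>A. pmf ?Q f * \<psi> a (f a))"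
    unfolding ent_def by (intro sum.cong refl key)
  also have "\<dots> = (\<Sum>a\<in>A. \<Sum>f\<in>set_pmf ?Q. pmf ?Q f * \<psi> a (f a))" by (rule sum.swap)
  also have "\<dots> = (\<Sum>a\<in>A. ent (P a))"
  proof (rule sum.cong[OF refl])
    fix a assume a: "a \<in> A"
    have "(\<Sum>f\<in>set_pmf ?Q. pmf ?Q f * \<psi> a (f a)) = measure_pmf.expectation ?Q (\<lambda>f. \<psi> a (f a))"
      by (subst integral_measure_pmf_real[OF finQ]) (auto simp: mult.commute)
    also have "\<dots> = measure_pmf.expectation (map_pmf (\<lambda>f. f a) ?Q) (\<psi> a)" by simp
    also have "map_pmf (\<lambda>f. f a) ?Q = P a" using Pi_pmf_component[OF finA, of a d P] a by simp
    also have "measure_pmf.expectation (P a) (\<psi> a) = ent (P a)"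
      unfolding ent_def \<psi>_def by (subst integral_measure_pmf_real[OF finP[OF a]]) (auto simp: mult.commute)
    finally show "(\<Sum>f\<in>set_pmf ?Q. pmf ?Q f * \<psi> a (f a)) = ent (P a)" .
  qed
  finally show ?thesis .
qed

lemma ent_bool: "ent (P :: bool pmf) = hb (pmf P True)"
proof -
  have "ent P = (\<Sum>x\<in>UNIV. pmf P x * (- log 2 (pmf P x)))"
    unfolding ent_def by (rule sum.mono_neutral_left) (auto simp: set_pmf_eq)
  also have "\<dots> = pmf P True * (- log 2 (pmf P True)) + (1 - pmf P True) * (- log 2 (1 - pmf P True))"
    by (simp add: UNIV_bool pmf_False_conv_True)
  also have "\<dots> = hb (pmf P True)"
  proof -
    have "pmf P True \<le> 1" by (rule pmf_le_1)
    then show ?thesis unfolding hb_def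
      by (cases "pmf P True = 0"; cases "pmf P True = 1") (auto simp: log_def)
  qed
  finally show ?thesis .
qed


definition qq :: "(nat \<Rightarrow> nat) \<Rightarrow> real \<Rightarrow> real \<Rightarrow> nat \<Rightarrow> nat \<Rightarrow> real" where
  "qq comm q1 q2 v u = (if comm v = comm u then q1 else q2)"

definition col :: "nat \<Rightarrow> (nat \<Rightarrow> nat) \<Rightarrow> real \<Rightarrow> real \<Rightarrow> nat \<Rightarrow> (nat \<Rightarrow> bool) pmf" where
  "col n comm q1 q2 u = Pi_pmf {..<n} False (\<lambda>v. bernoulli_pmf (qq comm q1 q2 v u))"

lemma trans_curry:
  "trans_pmf n comm q1 q2 = map_pmf (\<lambda>F (v, u). F u v) (Pi_pmf {..<n} (\<lambda>_. False) (col n comm q1 q2))"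
proof (rule pmf_eqI)
  fix e :: "nat \<times> nat \<Rightarrow> bool"
  let ?h = "\<lambda>(F :: nat \<Rightarrow> nat \<Rightarrow> bool) (v :: nat, u :: nat). F u v"
  let ?C = "Pi_pmf {..<n} (\<lambda>_. False) (col n comm q1 q2)"
  let ?b = "\<lambda>v u. bernoulli_pmf (qq comm q1 q2 v u)"
  have inj: "inj ?h"
  proof (rule injI)
    fix F G assume "?h F = ?h G"
    then have "\<And>u v. F u v = G u v" by (metis case_prod_conv)
    then show "F = G" by (intro ext)
  qed
  have e: "e = ?h (\<lambda>u v. e (v, u))" by auto
  have "pmf (map_pmf ?h ?C) e = pmf ?C (\<lambda>u v. e (v, u))"
    by (subst e, rule pmf_map_inj'[OF inj])
  also have "\<dots> = pmf (trans_pmf n comm q1 q2) e"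
  proof (cases "\<forall>v u. \<not> (v < n \<and> u < n) \<longrightarrow> \<not> e (v, u)")
    case True
    have "pmf ?C (\<lambda>u v. e (v, u)) = (\<Prod>u<n. \<Prod>v<n. pmf (?b v u) (e (v, u)))"
      using True by (auto simp: pmf_Pi col_def fun_eq_iff intro!: prod.cong)
    also have "\<dots> = (\<Prod>v<n. \<Prod>u<n. pmf (?b v u) (e (v, u)))" by (rule prod.swap)
    also have "\<dots> = (\<Prod>x\<in>{..<n} \<times> {..<n}. pmf (case x of (v, u) \<Rightarrow> ?b v u) (e x))"
      by (subst prod.cartesian_product) (auto intro!: prod.cong)
    also have "\<dots> = pmf (trans_pmf n comm q1 q2) e"
      unfolding trans_pmf_def using True by (subst pmf_Pi) (auto simp: qq_def)
    finally show ?thesis .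
  next
    case False
    then obtain v u where vu: "\<not> (v < n \<and> u < n)" "e (v, u)" by blast
    have l: "pmf (trans_pmf n comm q1 q2) e = 0"
      unfolding trans_pmf_def using vu by (subst pmf_Pi) auto
    have "pmf ?C (\<lambda>u v. e (v, u)) = 0"
    proof (cases "u < n")
      case True
      then have "v \<ge> n" using vu by auto
      have "pmf (col n comm q1 q2 u) (\<lambda>v. e (v, u)) = 0"
        unfolding col_def using vu \<open>v \<ge> n\<close> by (subst pmf_Pi) auto
      then show ?thesis using True by (subst pmf_Pi) auto
    next
      case False
      then show ?thesis using vu by (subst pmf_Pi) (auto simp: fun_eq_iff)
    qed
    then show ?thesis using l by simp
  qed
  finally show "pmf (trans_pmf n comm q1 q2) e = pmf (map_pmf ?h ?C) e" by simp
qed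

definition gg :: "nat \<Rightarrow> (nat \<Rightarrow> bool) \<Rightarrow> nat \<Rightarrow> (nat \<Rightarrow> bool) \<Rightarrow> bool" where
  "gg n s u c = (s u \<or> (\<exists>v<n. v \<noteq> u \<and> s v \<and> c v))"

lemma DS_Pi:
  "map_pmf (infection_state n s) (trans_pmf n comm q1 q2)
     = Pi_pmf {..<n} False (\<lambda>u. map_pmf (gg n s u) (col n comm q1 q2 u))"
proof -
  let ?C = "Pi_pmf {..<n} (\<lambda>_. False) (col n comm q1 q2)"
  have "Pi_pmf {..<n} False (\<lambda>u. map_pmf (gg n s u) (col n comm q1 q2 u))
      = Pi_pmf {..<n} False (\<lambda>u. bind_pmf (col n comm q1 q2 u) (\<lambda>c. return_pmf (gg n s u c)))"
    by (simp add: map_pmf_def)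
  also have "\<dots> = bind_pmf ?C (\<lambda>F. Pi_pmf {..<n} False (\<lambda>u. return_pmf (gg n s u (F u))))"
    by (rule Pi_pmf_bind) simp
  also have "\<dots> = bind_pmf ?C (\<lambda>F. return_pmf (\<lambda>u. if u \<in> {..<n} then gg n s u (F u) else False))"
    by simp
  also have "\<dots> = map_pmf (\<lambda>F u. if u \<in> {..<n} then gg n s u (F u) else False) ?C"
    by (simp add: map_pmf_def)
  also have "\<dots> = map_pmf (infection_state n s) (map_pmf (\<lambda>F (v, u). F u v) ?C)"
    by (simp add: pmf.map_comp o_def, intro map_pmf_cong refl ext) (auto simp: infection_state_def gg_def)
  finally show ?thesis by (simp add: trans_curry)
qed

lemma col_prob:
  assumes "0 \<le> q1" "q1 \<le> 1" "0 \<le> q2" "q2 \<le> 1"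
  shows "pmf (map_pmf (gg n s u) (col n comm q1 q2 u)) True
    = (if s u then 1 else 1 - (\<Prod>v<n. if v \<noteq> u \<and> s v then 1 - qq comm q1 q2 v u else 1))"
proof -
  let ?M = "col n comm q1 q2 u"
  have q: "0 \<le> qq comm q1 q2 v u" "qq comm q1 q2 v u \<le> 1" for v using assms by (auto simp: qq_def)
  have "pmf (map_pmf (gg n s u) ?M) True = measure_pmf.prob ?M {c. gg n s u c}"
    by (simp add: pmf_map vimage_def)
  also have "\<dots> = (if s u then 1 else 1 - (\<Prod>v<n. if v \<noteq> u \<and> s v then 1 - qq comm q1 q2 v u else 1))"
  proof (cases "s u")
    case True
    then show ?thesis by (simp add: gg_def)
  next
    case False
    let ?B = "\<lambda>v. if v \<noteq> u \<and> s v then {False} else UNIV"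
    have "{c. gg n s u c} = UNIV - Pi {..<n} ?B"
      using False by (auto simp: gg_def Pi_def split: if_splits)
    then have "measure_pmf.prob ?M {c. gg n s u c} = 1 - measure_pmf.prob ?M (Pi {..<n} ?B)"
      using measure_pmf.prob_compl[of "Pi {..<n} ?B" ?M] by simp
    also have "measure_pmf.prob ?M (Pi {..<n} ?B)
       = (\<Prod>v<n. measure_pmf.prob (bernoulli_pmf (qq comm q1 q2 v u)) (?B v))"
      unfolding col_def by (rule measure_Pi_pmf_Pi) simp
    also have "\<dots> = (\<Prod>v<n. if v \<noteq> u \<and> s v then 1 - qq comm q1 q2 v u else 1)"
      by (intro prod.cong refl) (simp add: measure_pmf_single q)
    finally show ?thesis using False by simp
  qed
  finally show ?thesis .
qed


definition Fn :: "nat \<Rightarrow> (nat \<Rightarrow> bool) set" where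
  "Fn n = PiE_dflt {..<n} False (\<lambda>_. UNIV)"

lemma finite_Fn: "finite (Fn n)" unfolding Fn_def by (intro finite_PiE_dflt) auto

lemma set_seed: "set_pmf (seed_pmf n p) \<subseteq> Fn n"
  using set_Pi_pmf_subset[of "{..<n}" False "\<lambda>_. bernoulli_pmf p"]
  unfolding seed_pmf_def Fn_def PiE_dflt_def by auto

lemma set_DS: "set_pmf (map_pmf (infection_state n s) (trans_pmf n comm q1 q2)) \<subseteq> Fn n"
  by (auto simp: Fn_def PiE_dflt_def infection_state_def)

lemma set_SBIM: "set_pmf (SBIM n comm p q1 q2) \<subseteq> Fn n"
  unfolding SBIM_def by (auto simp: set_bind_pmf Fn_def PiE_dflt_def infection_state_def)

lemma prod_if_const: "finite A \<Longrightarrow> (\<Prod>v\<in>A. if P v then (a::real) else 1) = a ^ card {v\<in>A. P v}"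
  by (simp add: prod.inter_filter[symmetric])

lemma ent_DS:
  assumes "0 \<le> q1" "q1 \<le> 1" "0 \<le> q2" "q2 \<le> 1"
  shows "ent (map_pmf (infection_state n s) (trans_pmf n comm q1 q2))
    = (\<Sum>u<n. if s u then 0 else hb (1 - (1 - q1) ^ card {v. v < n \<and> comm v = comm u \<and> s v}
                                       * (1 - q2) ^ card {v. v < n \<and> comm v \<noteq> comm u \<and> s v}))"
proof -
  have "ent (map_pmf (infection_state n s) (trans_pmf n comm q1 q2))
     = (\<Sum>u<n. hb (pmf (map_pmf (gg n s u) (col n comm q1 q2 u)) True))"
    by (simp add: DS_Pi ent_Pi ent_bool)
  also have "\<dots> = (\<Sum>u<n. if s u then 0 else hb (1 - (1 - q1) ^ card {v. v < n \<and> comm v = comm u \<and> s v}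
                                       * (1 - q2) ^ card {v. v < n \<and> comm v \<noteq> comm u \<and> s v}))"
  proof (intro sum.cong refl)
    fix u assume "u \<in> {..<n}"
    show "hb (pmf (map_pmf (gg n s u) (col n comm q1 q2 u)) True) = (if s u then 0 else hb (1 - (1 - q1) ^ card {v. v < n \<and> comm v = comm u \<and> s v}
                                       * (1 - q2) ^ card {v. v < n \<and> comm v \<noteq> comm u \<and> s v}))"
    proof (cases "s u")
      case True
      then show ?thesis using assms by (simp add: col_prob hb_def)
    next
      case False
      have "(\<Prod>v<n. if v \<noteq> u \<and> s v then 1 - qq comm q1 q2 v u else 1)
          = (\<Prod>v<n. (if s v \<and> comm v = comm u then 1 - q1 else 1) * (if s v \<and> comm v \<noteq> comm u then 1 - q2 else 1))"
        using False by (intro prod.cong refl) (auto simp: qq_def)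
      also have "\<dots> = (1 - q1) ^ card {v. v < n \<and> comm v = comm u \<and> s v} * (1 - q2) ^ card {v. v < n \<and> comm v \<noteq> comm u \<and> s v}"
        by (simp add: prod.distrib prod_if_const conj_commute conj_left_commute)
      finally show ?thesis using False assms by (simp add: col_prob)
    qed
  qed
  finally show ?thesis .
qed


lemma regroup:
  assumes vp: "valid_partition n m k comm"
  shows "(\<Sum>u<n. if s u then 0 else hb (1 - (1 - q1) ^ card {v. v < n \<and> comm v = comm u \<and> s v}
                                       * (1 - q2) ^ card {v. v < n \<and> comm v \<noteq> comm u \<and> s v}))
    = (\<Sum>j<m. real (k - card {v. v < n \<and> comm v = j \<and> s v}) * hb (1 - (1 - q1) ^ card {v. v < n \<and> comm v = j \<and> s v}
                                       * (1 - q2) ^ card {v. v < n \<and> comm v \<noteq> j \<and> s v}))"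
    (is "(\<Sum>u<n. ?h u) = (\<Sum>j<m. ?r j)")
proof -
  have cm: "\<forall>v<n. comm v < m" and ck: "\<And>j. j < m \<Longrightarrow> card {v. v < n \<and> comm v = j} = k"
    using vp unfolding valid_partition_def by auto
  have "(\<Sum>u<n. ?h u) = (\<Sum>j<m. \<Sum>u\<in>{x. x \<in> {..<n} \<and> comm x = j}. ?h u)"
    by (rule sum.group[symmetric]) (use cm in auto)
  also have "\<dots> = (\<Sum>j<m. ?r j)"
  proof (rule sum.cong[OF refl])
    fix j assume j: "j \<in> {..<m}"
    define A where "A = {x. x \<in> {..<n} \<and> comm x = j}"
    define F where "F = hb (1 - (1 - q1) ^ card {v. v < n \<and> comm v = j \<and> s v}
                                       * (1 - q2) ^ card {v. v < n \<and> comm v \<noteq> j \<and> s v})"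
    have finA: "finite A" unfolding A_def by auto
    have "(\<Sum>u\<in>A. ?h u) = (\<Sum>u\<in>A. if \<not> s u then F else 0)"
      by (intro sum.cong refl) (auto simp: A_def F_def)
    also have "\<dots> = real (card {u\<in>A. \<not> s u}) * F"
      by (simp add: sum.inter_filter[symmetric] finA)
    also have "card {u\<in>A. \<not> s u} = k - card {v. v < n \<and> comm v = j \<and> s v}"
    proof -
      have "A = {u\<in>A. \<not> s u} \<union> {u\<in>A. s u}" by auto
      then have "card A = card {u\<in>A. \<not> s u} + card {u\<in>A. s u}"
        using finA by (metis (no_types, lifting) card_Un_disjoint disjoint_iff finite_Un mem_Collect_eq)
      moreover have "card A = k" using ck j by (simp add: A_def)
      moreover have "{u\<in>A. s u} = {v. v < n \<and> comm v = j \<and> s v}" by (auto simp: A_def)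
      ultimately show ?thesis by simp
    qed
    finally show "(\<Sum>u\<in>{x. x \<in> {..<n} \<and> comm x = j}. ?h u) = ?r j" by (simp add: A_def F_def)
  qed
  finally show ?thesis .
qed

lemma seed_counts:
  assumes vp: "valid_partition n m k comm" and j: "j < m" and p: "0 \<le> p" "p \<le> 1"
  shows "map_pmf (\<lambda>s. (card {v. v < n \<and> comm v = j \<and> s v}, card {v. v < n \<and> comm v \<noteq> j \<and> s v})) (seed_pmf n p)
     = pair_pmf (binomial_pmf k p) (binomial_pmf (n - k) p)"
proof -
  define A where "A = {v. v < n \<and> comm v = j}"
  define B where "B = {v. v < n \<and> comm v \<noteq> j}"
  have fin: "finite A" "finite B" and dis: "A \<inter> B = {}" and un: "{..<n} = A \<union> B"
    by (auto simp: A_def B_def)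
  have cA: "card A = k" using vp j unfolding valid_partition_def A_def by auto
  have cB: "card B = n - k"
  proof -
    have "card {..<n} = card A + card B" using fin dis un by (simp add: card_Un_disjoint)
    then show ?thesis using cA by simp
  qed
  let ?b = "\<lambda>_::nat. bernoulli_pmf p"
  have "seed_pmf n p = map_pmf (\<lambda>(f,g) x. if x \<in> A then f x else g x)
             (pair_pmf (Pi_pmf A False ?b) (Pi_pmf B False ?b))"
    unfolding seed_pmf_def un using Pi_pmf_union[OF fin dis, of False ?b] by simp
  then have "map_pmf (\<lambda>s. (card {v. v < n \<and> comm v = j \<and> s v}, card {v. v < n \<and> comm v \<noteq> j \<and> s v})) (seed_pmf n p)
      = map_pmf (\<lambda>(f,g). (card {v\<in>A. f v}, card {v\<in>B. g v})) (pair_pmf (Pi_pmf A False ?b) (Pi_pmf B False ?b))"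
  proof -
    have eq: "(card {v. v < n \<and> comm v = j \<and> (if v \<in> A then f v else g v)},
               card {v. v < n \<and> comm v \<noteq> j \<and> (if v \<in> A then f v else g v)}) = (card {v\<in>A. f v}, card {v\<in>B. g v})" for f g
    proof -
      have "{v. v < n \<and> comm v = j \<and> (if v \<in> A then f v else g v)} = {v\<in>A. f v}"
        by (auto simp: A_def)
      moreover have "{v. v < n \<and> comm v \<noteq> j \<and> (if v \<in> A then f v else g v)} = {v\<in>B. g v}"
        by (auto simp: A_def B_def)
      ultimately show ?thesis by simp
    qed
    show ?thesis unfolding \<open>seed_pmf n p = _\<close> pmf.map_comp o_def
      apply (intro map_pmf_cong refl)
      subgoal for x by (cases x) (simp only: prod.case eq)
      done
  qed
  also have "\<dots> = pair_pmf (map_pmf (\<lambda>f. card {v\<in>A. f v}) (Pi_pmf A False ?b))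
                          (map_pmf (\<lambda>g. card {v\<in>B. g v}) (Pi_pmf B False ?b))"
    by (rule map_pair)
  also have "\<dots> = pair_pmf (binomial_pmf k p) (binomial_pmf (n - k) p)"
    using p fin cA cB by (simp add: binomial_pmf_altdef'[symmetric])
  finally show ?thesis .
qed


lemma neg_log_half_pow: "- log 2 ((1/2::real) ^ t) = real t"
  by (simp add: log_nat_power log_divide)

theorem lemma5:
  fixes n m k :: nat and comm :: "nat \<Rightarrow> nat" and p q1 q2 :: real and sch :: gt_scheme
  assumes "k > 0"
    and "valid_partition n m k comm"
    and "0 < p" "p \<le> 1"
    and "0 \<le> q1" "q1 \<le> 1" "0 \<le> q2" "q2 \<le> 1"
    and "exact_recovery n (SBIM n comm p q1 q2) sch"
  shows "measure_pmf.expectation (SBIM n comm p q1 q2) (\<lambda>x. real (num_tests sch x))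
     \<ge> real m * measure_pmf.expectation (pair_pmf (binomial_pmf k p) (binomial_pmf (n - k) p))
          (\<lambda>(z, z'). real (k - z) * hb (1 - (1 - q1) ^ z * (1 - q2) ^ z'))"
proof -
  note vp = assms(2)
  define D where "D = SBIM n comm p q1 q2"
  define S where "S = seed_pmf n p"
  define DS where "DS s = map_pmf (infection_state n s) (trans_pmf n comm q1 q2)" for s
  define \<phi> where "\<phi> = (\<lambda>(z, z'). real (k - z) * hb (1 - (1 - q1) ^ z * (1 - q2) ^ z'))"
  define cnt where "cnt j s = (card {v. v < n \<and> comm v = j \<and> s v}, card {v. v < n \<and> comm v \<noteq> j \<and> s v})"
    for j and s :: "nat \<Rightarrow> bool"
  have DSD: "D = bind_pmf S DS" unfolding D_def S_def DS_def SBIM_def ..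
  have finD: "finite (set_pmf D)" using set_SBIM finite_Fn unfolding D_def by (rule finite_subset)
  have finS: "finite (set_pmf S)" using set_seed finite_Fn unfolding S_def by (rule finite_subset)
  have finDS: "finite (set_pmf (DS s))" for s using set_DS finite_Fn unfolding DS_def by (rule finite_subset)
  have inj: "inj_on (scheme_output sch) (set_pmf D)"
  proof (rule inj_onI)
    fix x y assume x: "x \<in> set_pmf D" and y: "y \<in> set_pmf D" and eq: "scheme_output sch x = scheme_output sch y"
    show "x = y"
    proof
      fix u show "x u = y u"
      proof (cases "u < n")
        case True
        then show ?thesis using assms(9) x y eq unfolding exact_recovery_def D_def by metis
      next
        case False
        then show ?thesis using x y set_SBIM unfolding D_def Fn_def PiE_dflt_def by blast
      qed
    qed
  qed
  have s1: "ent D \<le> measure_pmf.expectation D (\<lambda>x. real (num_tests sch x))"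
  proof -
    have "measure_pmf.expectation D (\<lambda>x. real (num_tests sch x))
        = (\<Sum>x\<in>set_pmf D. pmf D x * (- log 2 ((1/2) ^ num_tests sch x)))"
      by (subst integral_measure_pmf_real[OF finD]) (auto simp: neg_log_half_pow mult.commute)
    moreover have "ent D \<le> (\<Sum>x\<in>set_pmf D. pmf D x * (- log 2 ((1/2) ^ num_tests sch x)))"
      unfolding ent_def
    proof (rule gibbs[OF finD])
      show "\<And>x. x \<in> set_pmf D \<Longrightarrow> 0 < pmf D x \<and> 0 < (1/2::real) ^ num_tests sch x"
        by (simp add: pmf_positive)
      show "sum (pmf D) (set_pmf D) = 1" using finD by (simp add: sum_pmf_eq_1)
      show "(\<Sum>x\<in>set_pmf D. (1/2::real) ^ num_tests sch x) \<le> 1" by (rule kraft[OF finD inj])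
    qed
    ultimately show ?thesis by simp
  qed
  have s2: "(\<Sum>s\<in>set_pmf S. pmf S s * ent (DS s)) \<le> ent D"
    unfolding DSD by (rule ent_bind[OF finS finDS])
  have s3: "ent (DS s) = (\<Sum>j<m. \<phi> (cnt j s))" for s
    unfolding DS_def ent_DS[OF assms(5-8)] regroup[OF vp] \<phi>_def cnt_def by simp
  have s4: "(\<Sum>s\<in>set_pmf S. pmf S s * (\<Sum>j<m. \<phi> (cnt j s)))
      = real m * measure_pmf.expectation (pair_pmf (binomial_pmf k p) (binomial_pmf (n - k) p)) \<phi>"
  proof -
    have "(\<Sum>s\<in>set_pmf S. pmf S s * (\<Sum>j<m. \<phi> (cnt j s))) = (\<Sum>j<m. \<Sum>s\<in>set_pmf S. \<phi> (cnt j s) * pmf S s)"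
      by (simp add: sum_distrib_left sum.swap[of _ "set_pmf S"] mult.commute)
    also have "\<dots> = (\<Sum>j<m. measure_pmf.expectation (pair_pmf (binomial_pmf k p) (binomial_pmf (n - k) p)) \<phi>)"
    proof (rule sum.cong[OF refl])
      fix j assume j: "j \<in> {..<m}"
      have "(\<Sum>s\<in>set_pmf S. \<phi> (cnt j s) * pmf S s) = measure_pmf.expectation S (\<lambda>s. \<phi> (cnt j s))"
        by (subst integral_measure_pmf_real[OF finS]) auto
      also have "\<dots> = measure_pmf.expectation (map_pmf (cnt j) S) \<phi>" by simp
      also have "map_pmf (cnt j) S = pair_pmf (binomial_pmf k p) (binomial_pmf (n - k) p)"
        unfolding S_def cnt_def using j assms(3,4) by (intro seed_counts[OF vp]) auto
      finally show "(\<Sum>s\<in>set_pmf S. \<phi> (cnt j s) * pmf S s)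
          = measure_pmf.expectation (pair_pmf (binomial_pmf k p) (binomial_pmf (n - k) p)) \<phi>" .
    qed
    also have "\<dots> = real m * measure_pmf.expectation (pair_pmf (binomial_pmf k p) (binomial_pmf (n - k) p)) \<phi>"
      by simp
    finally show ?thesis .
  qed
  show ?thesis
    using s1 s2 s4 unfolding s3 D_def[symmetric] \<phi>_def[symmetric] by linarith
qed

end
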